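(* Let $d$ be a positive integer, let $0 \le \kappa < d$ be a real number and let $K>0$. Let $N$ be a positive integer and let $S \subseteq [N]^d=\{1,\ldots,N\}^d$ be a set which, for every prime $p$, occupies at most $K p^{\kappa}$ residue classes modulo $p$ (i.e. the image of $S$ in $(\mathbb{Z}/p\mathbb{Z})^d$ has at most $K p^{\kappa}$ elements). Then for every $\varepsilon>0$ there exists a nonzero polynomial $P \in \mathbb{Z}[x_1,\ldots,x_d]$ of complexity at most $C(\log N)^{\frac{\kappa}{d-\kappa}}$ vanishing on at least $(1-\varepsilon)|S|$ points of $S$, where $C$ is a constant depending only on $\kappa, d, \varepsilon$ (and the implied constant $K$), and not on $N$ or $S$.
   Context: A nonzero polynomial in $\mathbb{Z}[x_1,\ldots,x_d]$ is said to have complexity at most $C$ if it has degree at most $C$ and all its coefficients are bounded in absolute value by $N^{C}$. Here $N$ is a parameter tending to infinity; asymptotic statements and constants are uniform in $N$. *)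

theory Defs
  imports Complex_Main "HOL-Computational_Algebra.Primes"
begin

text \<open>Points of Z^d are functions nat => int, zero outside {0..<d}.
 Multivariate integer polynomials in d variables are coefficient functions
 on exponent vectors alpha :: nat => nat (zero outside {0..<d}).\<close>

definition grid :: "nat \<Rightarrow> nat \<Rightarrow> (nat \<Rightarrow> int) set" where
  "grid d N = {x. (\<forall>i<d. 1 \<le> x i \<and> x i \<le> int N) \<and> (\<forall>i. d \<le> i \<longrightarrow> x i = 0)}"

definition reduce_mod :: "nat \<Rightarrow> (nat \<Rightarrow> int) \<Rightarrow> (nat \<Rightarrow> int)" where
  "reduce_mod p x = (\<lambda>i. x i mod int p)"

definition mono_vecs :: "nat \<Rightarrow> real \<Rightarrow> (nat \<Rightarrow> nat) set" where
  "mono_vecs d A = {\<alpha>. (\<forall>i. d \<le> i \<longrightarrow> \<alpha> i = 0) \<and> real (sum \<alpha> {..<d}) \<le> A}"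

definition mpoly_eval :: "nat \<Rightarrow> real \<Rightarrow> ((nat \<Rightarrow> nat) \<Rightarrow> int) \<Rightarrow> (nat \<Rightarrow> int) \<Rightarrow> int" where
  "mpoly_eval d A c x = (\<Sum>\<alpha>\<in>mono_vecs d A. c \<alpha> * (\<Prod>i<d. x i ^ \<alpha> i))"

definition nonzero_poly_complexity :: "nat \<Rightarrow> nat \<Rightarrow> real \<Rightarrow> ((nat \<Rightarrow> nat) \<Rightarrow> int) \<Rightarrow> bool" where
  "nonzero_poly_complexity d N A c \<longleftrightarrow>
     (\<forall>\<alpha>. \<alpha> \<notin> mono_vecs d A \<longrightarrow> c \<alpha> = 0) \<and>
     (\<forall>\<alpha>. real_of_int \<bar>c \<alpha>\<bar> \<le> real N powr A) \<and>
     (\<exists>\<alpha>. c \<alpha> \<noteq> 0)"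

end

theory Submission
  imports Defs "HOL-Real_Asymp.Real_Asymp" "HOL-Analysis.Harmonic_Numbers" "HOL-Number_Theory.Cong"
begin


lemma Suc_div_split: "(0::nat) < q \<Longrightarrow> Suc m div q = m div q + (if q dvd Suc m then 1 else 0)"
  by (simp add: div_Suc dvd_eq_mod_eq_0)

lemma sum_indicator_card: "finite A \<Longrightarrow> (\<Sum>k\<in>A. (if P k then 1 else 0::nat)) = card {k\<in>A. P k}"
  by (simp add: sum.If_cases Int_def conj_commute)

lemma mult_card:
  assumes p: "prime (p::nat)" and x: "0 < x" "x < p^K"
  shows "multiplicity p x = card {k\<in>{1..K}. p^k dvd x}"
proof -
  have "p ^ multiplicity p x dvd x" by (rule multiplicity_dvd)
  hence "p ^ multiplicity p x \<le> x" using x by (simp add: dvd_imp_le)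
  hence "p ^ multiplicity p x < p ^ K" using x by linarith
  hence lt: "multiplicity p x < K" using p prime_gt_1_nat power_less_imp_less_exp by blast
  have iff: "\<And>k. p^k dvd x \<longleftrightarrow> k \<le> multiplicity p x"
  proof -
    fix k have "p \<noteq> Suc 0" using p by auto
    thus "p^k dvd x \<longleftrightarrow> k \<le> multiplicity p x"
      using power_dvd_iff_le_multiplicity[of x p k] x by auto
  qed
  have "{k\<in>{1..K}. p^k dvd x} = {1..multiplicity p x}"
    using lt by (auto simp: iff)
  thus ?thesis by simp
qed

lemma legendre:
  assumes p: "prime (p::nat)"
  shows "m < p^K \<Longrightarrow> multiplicity p (fact m :: nat) = (\<Sum>k=1..K. m div p^k)"
proof (induction m)
  case 0
  then show ?case by simp
next
  case (Suc m)
  have IH: "multiplicity p (fact m :: nat) = (\<Sum>k=1..K. m div p^k)" using Suc by simp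
  have "multiplicity p (fact (Suc m) :: nat) = multiplicity p (Suc m * fact m)"
    by (simp add: fact_Suc)
  also have "\<dots> = multiplicity p (Suc m) + multiplicity p (fact m :: nat)"
    using p by (intro prime_elem_multiplicity_mult_distrib) auto
  also have "multiplicity p (Suc m) = card {k\<in>{1..K}. p^k dvd Suc m}"
    using mult_card[OF p, of "Suc m" K] Suc.prems by simp
  also have "\<dots> = (\<Sum>k=1..K. (if p^k dvd Suc m then 1 else 0))"
    by (simp add: sum_indicator_card)
  finally have "multiplicity p (fact (Suc m) :: nat) = (\<Sum>k=1..K. m div p^k + (if p^k dvd Suc m then 1 else 0))"
    using IH by (simp add: sum.distrib)
  also have "\<dots> = (\<Sum>k=1..K. Suc m div p^k)"
    using p by (intro sum.cong refl, subst Suc_div_split) (auto simp: prime_gt_0_nat)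
  finally show ?case .
qed

lemma mult_central:
  assumes p: "prime (p::nat)" and n: "n > 0"
  shows "p ^ multiplicity p ((2*n) choose n) \<le> 2*n"
proof (rule ccontr)
  define r where "r = multiplicity p ((2*n) choose n)"
  define K where "K = 2*n"
  assume "\<not> p ^ multiplicity p ((2*n) choose n) \<le> 2*n"
  hence big: "p ^ r > 2*n" by (simp add: r_def)
  have pg: "p \<ge> 2" using p prime_ge_2_nat by blast
  have "2*n < 2^(2*n)" by (rule less_exp)
  also have "(2::nat)^(2*n) \<le> p^(2*n)" using pg by (simp add: power_mono)
  finally have nK: "2*n < p^K" by (simp add: K_def)
  hence nK': "n < p^K" by linarith
  have "fact (2*n) = (fact n * fact n * ((2*n) choose n) :: nat)"
    using binomial_fact_lemma[of n "2*n"] by (simp add: mult_2 algebra_simps)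
  hence "multiplicity p (fact (2*n) :: nat) = multiplicity p (fact n :: nat) + multiplicity p (fact n :: nat) + r"
    using p by (simp add: prime_elem_multiplicity_mult_distrib r_def)
  hence req: "(\<Sum>k=1..K. 2*n div p^k) = (\<Sum>k=1..K. n div p^k) + (\<Sum>k=1..K. n div p^k) + r"
    using legendre[OF p nK] legendre[OF p nK'] by simp
  have "r = (\<Sum>k=1..K. (2*n div p^k - 2 * (n div p^k)))"
  proof -
    have le: "\<And>k. 2 * (n div p^k) \<le> 2*n div p^k"
    proof -
      fix k have q: "p^k > 0" using pg by simp
      have "2 * (n div p^k) * p^k \<le> 2*n" by (simp add: mult.assoc)
      thus "2 * (n div p^k) \<le> 2*n div p^k" using q by (simp add: less_eq_div_iff_mult_less_eq)
    qed
    have "(\<Sum>k=1..K. (2*n div p^k - 2 * (n div p^k))) = (\<Sum>k=1..K. 2*n div p^k) - (\<Sum>k=1..K. 2 * (n div p^k))"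
      using le by (simp add: sum_subtractf_nat)
    also have "\<dots> = r" using req by (simp add: sum.distrib mult_2)
    finally show ?thesis by simp
  qed
  also have "\<dots> \<le> (\<Sum>k=1..K. (if k < r then 1 else 0))"
  proof (intro sum_mono)
    fix k assume k: "k \<in> {1..K}"
    show "2*n div p^k - 2 * (n div p^k) \<le> (if k < r then 1 else 0)"
    proof (cases "k < r")
      case True
      have "2*n div p^k \<le> 2 * (n div p^k) + 1"
      proof -
        have q: "p^k > 0" using pg by simp
        have "2*n = (2*(n div p^k)) * p^k + 2 * (n mod p^k)"
          by (metis div_mult_mod_eq distrib_left mult.assoc)
        hence "2*n div p^k = 2*(n div p^k) + (2 * (n mod p^k)) div p^k"
          using q by simp
        moreover have "2 * (n mod p^k) < 2 * p^k" using q by simp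
        hence "(2 * (n mod p^k)) div p^k < 2" using q by (simp add: div_less_iff_less_mult)
        ultimately show ?thesis by linarith
      qed
      then show ?thesis using True by simp
    next
      case False
      hence "p^r \<le> p^k" using pg by (simp add: power_increasing)
      hence "2*n div p^k = 0" using big by simp
      then show ?thesis by simp
    qed
  qed
  also have "\<dots> = card {k\<in>{1..K}. k < r}" by (simp add: sum_indicator_card)
  also have "\<dots> \<le> card {1..<r}" by (intro card_mono) auto
  finally have "r \<le> r - 1" by simp
  moreover have "r \<ge> 1" using big n by (cases r) auto
  ultimately show False by linarith
qed

definition prim :: "nat \<Rightarrow> nat" where "prim q = \<Prod>{p. prime p \<and> p \<le> q}"

lemma finite_primes_le: "finite {p::nat. prime p \<and> p \<le> q}"
  by (rule finite_subset[of _ "{..q}"]) auto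

lemma prim_pos: "prim q > 0"
  unfolding prim_def using finite_primes_le by (intro prod_pos) (auto simp: prime_gt_0_nat)

lemma prim_mono: "a \<le> b \<Longrightarrow> prim a \<le> prim b"
  unfolding prim_def
  by (intro dvd_imp_le prod_dvd_prod_subset finite_primes_le) (use prim_pos[of b] in \<open>auto simp: prim_def\<close>)

lemma central_le:
  assumes n: "n > 0"
  shows "(2*n) choose n \<le> (2*n)^(nat \<lfloor>sqrt (real (2*n))\<rfloor>) * prim (2*n)"
proof -
  define B where "B = (2*n) choose n"
  define s where "s = nat \<lfloor>sqrt (real (2*n))\<rfloor>"
  have Bpos: "B > 0" by (simp add: B_def)
  define F where "F = prime_factors B"
  define F1 where "F1 = {p\<in>F. p*p \<le> 2*n}"
  define F2 where "F2 = {p\<in>F. \<not> p*p \<le> 2*n}"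
  have finF: "finite F" by (simp add: F_def)
  have Fprime: "\<And>p. p \<in> F \<Longrightarrow> prime p" by (auto simp: F_def in_prime_factors_iff)
  have Fle: "\<And>p. p \<in> F \<Longrightarrow> p \<le> 2*n"
  proof -
    fix p assume "p \<in> F"
    hence pp: "prime p" "p dvd B" by (auto simp: F_def)
    have e: "(fact (2*n)::nat) = fact n * fact n * B"
      using binomial_fact_lemma[of n "2*n"] by (simp add: B_def mult_2)
    have "B dvd fact (2*n)" by (simp add: e)
    hence "p dvd fact (2*n)" using pp by (meson dvd_trans)
    thus "p \<le> 2*n" using prime_dvd_fact_iff[OF pp(1)] by simp
  qed
  have "B = (\<Prod>p\<in>F. p ^ multiplicity p B)"
    unfolding F_def by (rule prime_factorization_nat[OF Bpos])
  also have "\<dots> = (\<Prod>p\<in>F1. p ^ multiplicity p B) * (\<Prod>p\<in>F2. p ^ multiplicity p B)"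
  proof -
    have e: "F = F1 \<union> F2" "F1 \<inter> F2 = {}" by (auto simp: F1_def F2_def)
    have "finite F1" "finite F2" using finF by (auto simp: F1_def F2_def)
    thus ?thesis using prod.union_disjoint[of F1 F2 "\<lambda>p. p ^ multiplicity p B"] e by simp
  qed
  also have "(\<Prod>p\<in>F1. p ^ multiplicity p B) \<le> (\<Prod>p\<in>F1. 2*n)"
    by (intro prod_mono) (auto simp: F1_def B_def intro!: mult_central Fprime n)
  also have "(\<Prod>p\<in>F1. 2*n) = (2*n) ^ card F1" by simp
  also have "\<dots> \<le> (2*n) ^ s"
  proof -
    have "F1 \<subseteq> {1..s}"
    proof
      fix p assume p: "p \<in> F1"
      hence "p \<ge> 1" using Fprime prime_ge_1_nat by (auto simp: F1_def)
      moreover have "real p \<le> sqrt (real (2*n))"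
        using p by (intro real_le_rsqrt) (auto simp: F1_def power2_eq_square simp flip: of_nat_mult)
      hence "p \<le> s" unfolding s_def by linarith
      ultimately show "p \<in> {1..s}" by simp
    qed
    hence "card F1 \<le> s" using card_mono[of "{1..s}" F1] by simp
    thus ?thesis using n by (intro power_increasing) auto
  qed
  also have "(\<Prod>p\<in>F2. p ^ multiplicity p B) \<le> (\<Prod>p\<in>F2. p)"
  proof (rule prod_mono)
    fix p assume p: "p \<in> F2"
    have pr: "prime p" using p Fprime unfolding F2_def by blast
    have big: "\<not> p*p \<le> 2*n" using p unfolding F2_def by blast
    have p1: "p > 1" using pr by (rule prime_gt_1_nat)
    have "p ^ multiplicity p B \<le> 2*n" unfolding B_def by (rule mult_central[OF pr n])
    also have "2*n < p ^ 2" using big by (simp add: power2_eq_square)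
    finally have "p ^ multiplicity p B < p ^ 2" .
    hence "multiplicity p B < 2" using p1 by (rule power_less_imp_less_exp[rotated])
    hence "multiplicity p B \<le> 1" by simp
    hence "p ^ multiplicity p B \<le> p ^ 1" using p1 by (intro power_increasing) auto
    thus "0 \<le> p ^ multiplicity p B \<and> p ^ multiplicity p B \<le> p" by simp
  qed
  also have "(\<Prod>p\<in>F2. p) \<le> prim (2*n)"
    unfolding prim_def
    by (intro dvd_imp_le prod_dvd_prod_subset finite_primes_le)
       (use prim_pos[of "2*n"] Fle Fprime in \<open>auto simp: prim_def F2_def\<close>)
  finally show ?thesis unfolding B_def s_def by (simp add: mult_mono)
qed

lemma central_lower: "(2::nat)^(2*n) \<le> (2*n+1) * ((2*n) choose n)"
proof -
  have "(2::nat)^(2*n) = (\<Sum>k\<le>2*n. (2*n) choose k)" by (simp add: choose_row_sum)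
  also have "\<dots> \<le> (\<Sum>k\<le>2*n. (2*n) choose n)" by (intro sum_mono binomial_maximum')
  also have "\<dots> = (2*n+1) * ((2*n) choose n)" by simp
  finally show ?thesis .
qed

lemma ln_prim_2n:
  assumes n: "n > 0"
  shows "ln (real (prim (2*n))) \<ge> 2*real n*ln 2 - ln (2*real n+1) - sqrt (2*real n) * ln (2*real n)"
proof -
  define s where "s = nat \<lfloor>sqrt (real (2*n))\<rfloor>"
  define B where "B = (2*n) choose n"
  have Bpos: "B > 0" by (simp add: B_def)
  have s_le: "real s \<le> sqrt (2*real n)" unfolding s_def by simp
  have "real ((2::nat)^(2*n)) \<le> real ((2*n+1) * B)"
    using central_lower[of n] unfolding B_def by (simp only: of_nat_le_iff)
  hence "ln (real ((2::nat)^(2*n))) \<le> ln (real ((2*n+1) * B))"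
    by (intro ln_mono) auto
  moreover have "ln (real ((2*n+1) * B)) = ln (2*real n+1) + ln (real B)"
    using Bpos by (subst of_nat_mult, subst ln_mult) auto
  ultimately have l1: "2*real n*ln 2 \<le> ln (2*real n+1) + ln (real B)"
    by (simp add: ln_realpow)
  have "real B \<le> real ((2*n)^s * prim (2*n))" using central_le[OF n] unfolding B_def s_def
    by (simp only: of_nat_le_iff)
  hence "ln (real B) \<le> ln (real ((2*n)^s * prim (2*n)))"
    using Bpos by (intro ln_mono) auto
  also have "\<dots> = real s * ln (2*real n) + ln (real (prim (2*n)))"
    using n prim_pos[of "2*n"] by (simp add: ln_mult ln_realpow algebra_simps)
  also have "real s * ln (2*real n) \<le> sqrt (2*real n) * ln (2*real n)"
    using s_le n by (intro mult_right_mono) auto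
  finally show ?thesis using l1 by linarith
qed

lemma cheb: "\<exists>c. \<forall>q. ln (real (prim q)) \<ge> real q / 2 - c"
proof -
  have "eventually (\<lambda>x::real. 2*x*(2/3) - ln (2*x+1) - sqrt (2*x) * ln (2*x) \<ge> x) at_top"
    by real_asymp
  then obtain X1 where X1: "\<And>x. x \<ge> X1 \<Longrightarrow> 2*x*(2/3) - ln (2*x+1) - sqrt (2*x) * ln (2*x) \<ge> x"
    by (auto simp: eventually_at_top_linorder)
  define X0 where "X0 = max X1 0"
  have X0: "2*x*ln 2 - ln (2*x+1) - sqrt (2*x) * ln (2*x) \<ge> x" if "x \<ge> X0" for x
  proof -
    have "2*x*(2/3) \<le> 2*x*ln 2" using that ln2_ge_two_thirds unfolding X0_def
      by (intro mult_left_mono) auto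
    thus ?thesis using X1[of x] that unfolding X0_def by linarith
  qed
  define N0 where "N0 = max 1 (nat \<lceil>X0\<rceil>)"
  have main: "ln (real (prim (2*n))) \<ge> real n - real N0" for n
  proof (cases "n \<ge> N0")
    case True
    hence n: "n > 0" "real n \<ge> X0" unfolding N0_def by linarith+
    show ?thesis using ln_prim_2n[OF n(1)] X0[OF n(2)] by linarith
  next
    case False
    have "ln (real (prim (2*n))) \<ge> 0" using prim_pos[of "2*n"] by simp
    thus ?thesis using False by linarith
  qed
  show ?thesis
  proof (intro exI allI)
    fix q :: nat
    define n where "n = q div 2"
    have "prim (2*n) \<le> prim q" by (intro prim_mono) (simp add: n_def)
    hence "ln (real (prim (2*n))) \<le> ln (real (prim q))"
      using prim_pos[of "2*n"] by (intro ln_mono) auto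
    moreover have "real n \<ge> real q / 2 - 1/2" unfolding n_def by linarith
    ultimately show "ln (real (prim q)) \<ge> real q / 2 - (real N0 + 1/2)" using main[of n] by linarith
  qed
qed




lemma card_funs:
  assumes "finite A" "finite B"
  shows "card {f. \<forall>x. (x\<in>A \<longrightarrow> f x \<in> B) \<and> (x\<notin>A \<longrightarrow> f x = z)} = card B ^ card A"
proof -
  let ?S = "{f. \<forall>x. (x\<in>A \<longrightarrow> f x \<in> B) \<and> (x\<notin>A \<longrightarrow> f x = z)}"
  have "bij_betw (\<lambda>f. restrict f A) ?S (PiE A (\<lambda>_. B))"
  proof (rule bij_betwI[where g = "\<lambda>g x. if x \<in> A then g x else z"])
    show "(\<lambda>f. restrict f A) \<in> ?S \<rightarrow> PiE A (\<lambda>_. B)" by auto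
    show "(\<lambda>g x. if x \<in> A then g x else z) \<in> PiE A (\<lambda>_. B) \<rightarrow> ?S" by auto
    show "(\<lambda>x. if x \<in> A then restrict f A x else z) = f" if "f \<in> ?S" for f
      using that by (auto simp: fun_eq_iff)
    show "restrict (\<lambda>x. if x \<in> A then g x else z) A = g" if "g \<in> PiE A (\<lambda>_. B)" for g
      using that by (auto simp: fun_eq_iff PiE_def extensional_def)
  qed
  hence "card ?S = card (PiE A (\<lambda>_. B))" by (rule bij_betw_same_card)
  also have "\<dots> = card B ^ card A" using assms by (simp add: card_PiE)
  finally show ?thesis .
qed

definition box :: "nat \<Rightarrow> nat \<Rightarrow> (nat \<Rightarrow> nat) set" where
  "box d t = {f. \<forall>x. (x\<in>{..<d} \<longrightarrow> f x \<in> {..t}) \<and> (x\<notin>{..<d} \<longrightarrow> f x = 0)}"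

lemma card_box: "card (box d t) = (t+1)^d"
  unfolding box_def by (subst card_funs) auto

lemma finite_box: "finite (box d t)"
  unfolding box_def by (intro finite_set_of_finite_funs) auto

lemma mono_vecs_sub_box: "mono_vecs d A \<subseteq> box d (nat \<lfloor>A\<rfloor>)"
proof
  fix \<alpha> assume a: "\<alpha> \<in> mono_vecs d A"
  have "\<alpha> i \<le> nat \<lfloor>A\<rfloor>" if i: "i < d" for i
  proof -
    have "\<alpha> i \<le> sum \<alpha> {..<d}" using i by (intro member_le_sum) auto
    moreover have "real (sum \<alpha> {..<d}) \<le> A" using a unfolding mono_vecs_def by blast
    ultimately have "real (\<alpha> i) \<le> A" by (meson of_nat_le_iff order_trans)
    thus ?thesis by linarith
  qed
  thus "\<alpha> \<in> box d (nat \<lfloor>A\<rfloor>)" using a by (auto simp: box_def mono_vecs_def)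
qed

lemma finite_mono_vecs: "finite (mono_vecs d A)"
  using finite_subset[OF mono_vecs_sub_box finite_box] .

lemma card_mono_vecs_upper: "card (mono_vecs d A) \<le> (nat \<lfloor>A\<rfloor> + 1)^d"
  using card_mono[OF finite_box mono_vecs_sub_box] card_box by simp

lemma box_sub_mono_vecs:
  assumes "A \<ge> 0"
  shows "box d (nat \<lfloor>A\<rfloor> div d) \<subseteq> mono_vecs d A"
proof
  fix \<alpha> assume a: "\<alpha> \<in> box d (nat \<lfloor>A\<rfloor> div d)"
  have "sum \<alpha> {..<d} \<le> (\<Sum>i<d. nat \<lfloor>A\<rfloor> div d)" using a by (intro sum_mono) (auto simp: box_def)
  also have "\<dots> = d * (nat \<lfloor>A\<rfloor> div d)" by simp
  also have "\<dots> \<le> nat \<lfloor>A\<rfloor>" by simp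
  finally have "real (sum \<alpha> {..<d}) \<le> A" using assms by linarith
  thus "\<alpha> \<in> mono_vecs d A" using a by (auto simp: box_def mono_vecs_def)
qed

lemma card_mono_vecs_lower:
  assumes "A \<ge> 0"
  shows "(nat \<lfloor>A\<rfloor> div d + 1)^d \<le> card (mono_vecs d A)"
  using card_mono[OF finite_mono_vecs box_sub_mono_vecs[OF assms]] card_box by simp

lemma finite_grid: "finite (grid d N)"
proof -
  have "grid d N \<subseteq> {f. \<forall>x. (x\<in>{..<d} \<longrightarrow> f x \<in> {1..int N}) \<and> (x\<notin>{..<d} \<longrightarrow> f x = 0)}"
    by (auto simp: grid_def)
  thus ?thesis by (rule finite_subset) (intro finite_set_of_finite_funs, auto)
qed

lemma eval_cong:
  assumes "\<And>i. [x i = y i] (mod m)"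
  shows "[mpoly_eval d A c x = mpoly_eval d A c y] (mod m)"
  unfolding mpoly_eval_def
  by (intro cong_sum cong_mult cong_refl cong_prod cong_pow assms)

lemma reduce_cong: "[reduce_mod p x i = x i] (mod int p)"
  by (simp add: reduce_mod_def cong_def)

lemma eval_diff: "mpoly_eval d A (\<lambda>\<alpha>. c1 \<alpha> - c2 \<alpha>) x = mpoly_eval d A c1 x - mpoly_eval d A c2 x"
  by (simp add: mpoly_eval_def sum_subtractf left_diff_distrib)

lemma eval_bound:
  assumes x: "x \<in> grid d N" and N: "N \<ge> 1" and c: "\<And>\<alpha>. \<bar>c \<alpha>\<bar> \<le> H"
  shows "real_of_int \<bar>mpoly_eval d A c x\<bar> \<le> real (card (mono_vecs d A)) * real_of_int H * real N powr A"
proof -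
  have xb: "real_of_int \<bar>x i\<bar> \<le> real N" if "i < d" for i
  proof -
    have "\<bar>x i\<bar> \<le> int N" using x that by (auto simp: grid_def)
    thus ?thesis by linarith
  qed
  have "\<bar>mpoly_eval d A c x\<bar> \<le> (\<Sum>\<alpha>\<in>mono_vecs d A. \<bar>c \<alpha> * (\<Prod>i<d. x i ^ \<alpha> i)\<bar>)"
    unfolding mpoly_eval_def by (rule sum_abs)
  hence "real_of_int \<bar>mpoly_eval d A c x\<bar> \<le> real_of_int (\<Sum>\<alpha>\<in>mono_vecs d A. \<bar>c \<alpha> * (\<Prod>i<d. x i ^ \<alpha> i)\<bar>)"
    by (simp only: of_int_le_iff)
  also have "\<dots> = (\<Sum>\<alpha>\<in>mono_vecs d A. real_of_int \<bar>c \<alpha> * (\<Prod>i<d. x i ^ \<alpha> i)\<bar>)"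
    by (simp only: of_int_sum)
  also have "\<dots> \<le> (\<Sum>\<alpha>\<in>mono_vecs d A. real_of_int H * real N powr A)"
  proof (rule sum_mono)
    fix \<alpha> assume a: "\<alpha> \<in> mono_vecs d A"
    have "\<bar>(\<Prod>i<d. x i ^ \<alpha> i)\<bar> = (\<Prod>i<d. \<bar>x i\<bar> ^ \<alpha> i)"
      by (simp only: abs_prod power_abs)
    hence "real_of_int \<bar>(\<Prod>i<d. x i ^ \<alpha> i)\<bar> = (\<Prod>i<d. real_of_int \<bar>x i\<bar> ^ \<alpha> i)"
      by (simp only: of_int_prod of_int_power)
    also have "\<dots> \<le> (\<Prod>i<d. real N ^ \<alpha> i)"
    proof (rule prod_mono)
      fix i assume "i \<in> {..<d}"
      hence "real_of_int \<bar>x i\<bar> \<le> real N" using xb by simp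
      thus "0 \<le> real_of_int \<bar>x i\<bar> ^ \<alpha> i \<and> real_of_int \<bar>x i\<bar> ^ \<alpha> i \<le> real N ^ \<alpha> i"
        by (auto intro: power_mono)
    qed
    also have "\<dots> = real N ^ (sum \<alpha> {..<d})" by (rule power_sum[symmetric])
    also have "\<dots> = real N powr real (sum \<alpha> {..<d})" using N by (intro powr_realpow[symmetric]) simp
    also have "\<dots> \<le> real N powr A"
    proof (rule powr_mono)
      show "real (sum \<alpha> {..<d}) \<le> A" using a unfolding mono_vecs_def by blast
      show "1 \<le> real N" using N by simp
    qed
    finally have b: "real_of_int \<bar>(\<Prod>i<d. x i ^ \<alpha> i)\<bar> \<le> real N powr A" .
    have "real_of_int \<bar>c \<alpha> * (\<Prod>i<d. x i ^ \<alpha> i)\<bar> = real_of_int \<bar>c \<alpha>\<bar> * real_of_int \<bar>(\<Prod>i<d. x i ^ \<alpha> i)\<bar>"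
      by (simp only: abs_mult of_int_mult)
    also have "\<dots> \<le> real_of_int H * real N powr A"
    proof (rule mult_mono)
      show "real_of_int \<bar>c \<alpha>\<bar> \<le> real_of_int H" using c[of \<alpha>] by (simp only: of_int_le_iff)
    qed (use b order_trans[OF abs_ge_zero c[of \<alpha>]] in auto)
    finally show "real_of_int \<bar>c \<alpha> * (\<Prod>i<d. x i ^ \<alpha> i)\<bar> \<le> real_of_int H * real N powr A" .
  qed
  also have "\<dots> = real (card (mono_vecs d A)) * real_of_int H * real N powr A" by simp
  finally show ?thesis .
qed

lemma prod_primes_dvd:
  assumes "finite P" "\<And>p. p \<in> P \<Longrightarrow> prime (p::nat)" "\<And>p. p \<in> P \<Longrightarrow> int p dvd z"
  shows "int (\<Prod>P) dvd z"
  using assms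
proof (induction P rule: finite_induct)
  case empty
  then show ?case by simp
next
  case (insert p P)
  have pp: "prime p" using insert by simp
  have "\<not> p dvd \<Prod>P"
  proof
    assume "p dvd \<Prod>P"
    then obtain q where "q \<in> P" "p dvd q" using pp insert(1) by (auto simp: prime_dvd_prod_iff)
    hence "p = q" using insert pp by (metis insertCI primes_dvd_imp_eq)
    thus False using \<open>q \<in> P\<close> insert(2) by simp
  qed
  hence "coprime p (\<Prod>P)" using pp by (intro prime_imp_coprime)
  hence cop: "coprime (int p) (int (\<Prod>P))" by (simp only: coprime_int_iff)
  have "int p * int (\<Prod>P) dvd z"
    using insert by (intro divides_mult cop) auto
  thus ?case using insert by simp
qed




lemma siegel:
  assumes S: "S \<subseteq> grid d N" and P: "finite P" "\<And>p. p\<in>P \<Longrightarrow> prime p"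
    and big: "(\<Prod>p\<in>P. p ^ card (reduce_mod p ` S)) < (H+1) ^ card (mono_vecs d A)"
  shows "\<exists>c. (\<forall>\<alpha>. \<alpha> \<notin> mono_vecs d A \<longrightarrow> c \<alpha> = 0) \<and> (\<forall>\<alpha>. \<bar>c \<alpha>\<bar> \<le> int H) \<and> (\<exists>\<alpha>. c \<alpha> \<noteq> 0)
      \<and> (\<forall>x\<in>S. \<forall>p\<in>P. int p dvd mpoly_eval d A c x)"
proof -
  define V where "V = mono_vecs d A"
  define ext where "ext = (\<lambda>f \<alpha>. if \<alpha> \<in> V then f \<alpha> else (0::int))"
  define Dom where "Dom = (SIGMA p:P. reduce_mod p ` S)"
  define \<Phi> where "\<Phi> = (\<lambda>f. restrict (\<lambda>(p,y). mpoly_eval d A (ext f) y mod int p) Dom)"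
  define Cs where "Cs = PiE V (\<lambda>_. {0..int H})"
  define T where "T = PiE Dom (\<lambda>(p,y). {0..<int p})"
  have finS: "finite S" using finite_subset[OF S finite_grid] .
  have finV: "finite V" by (simp add: V_def finite_mono_vecs)
  have finDom: "finite Dom" unfolding Dom_def using P finS by auto
  have nH: "nat (int H + 1) = Suc H" by simp
  have cardCs: "card Cs = (H+1) ^ card V" unfolding Cs_def using finV nH by (simp add: card_PiE)
  have "card T = (\<Prod>z\<in>Dom. card ((\<lambda>(p,y). {0..<int p}) z))"
    unfolding T_def using finDom by (simp add: card_PiE)
  also have "\<dots> = (\<Prod>z\<in>Dom. fst z)" by (intro prod.cong) auto
  also have "\<dots> = (\<Prod>p\<in>P. \<Prod>y\<in>reduce_mod p ` S. p)"
    unfolding Dom_def using P finS by (subst prod.Sigma) (auto simp: case_prod_beta)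
  also have "\<dots> = (\<Prod>p\<in>P. p ^ card (reduce_mod p ` S))" by simp
  finally have cardT: "card T < card Cs" using big cardCs by (simp add: V_def)
  have mapsto: "\<Phi> ` Cs \<subseteq> T"
  proof
    fix z assume "z \<in> \<Phi> ` Cs"
    then obtain f where z: "z = \<Phi> f" by auto
    show "z \<in> T" unfolding z \<Phi>_def T_def Dom_def
      using P by (auto simp: prime_gt_0_nat)
  qed
  have finT: "finite T" unfolding T_def using finDom by (intro finite_PiE) auto
  have "\<not> inj_on \<Phi> Cs"
  proof
    assume "inj_on \<Phi> Cs"
    hence "card Cs \<le> card T" using card_inj_on_le[OF _ mapsto finT] by simp
    thus False using cardT by simp
  qed
  then obtain f1 f2 where f: "f1 \<in> Cs" "f2 \<in> Cs" "f1 \<noteq> f2" "\<Phi> f1 = \<Phi> f2"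
    unfolding inj_on_def by blast
  define c where "c = (\<lambda>\<alpha>. ext f1 \<alpha> - ext f2 \<alpha>)"
  have c1: "\<forall>\<alpha>. \<alpha> \<notin> mono_vecs d A \<longrightarrow> c \<alpha> = 0" by (simp add: c_def ext_def V_def)
  have c2: "\<forall>\<alpha>. \<bar>c \<alpha>\<bar> \<le> int H"
  proof
    fix \<alpha> show "\<bar>c \<alpha>\<bar> \<le> int H"
    proof (cases "\<alpha> \<in> V")
      case True
      hence "f1 \<alpha> \<in> {0..int H}" "f2 \<alpha> \<in> {0..int H}" using f unfolding Cs_def by auto
      thus ?thesis using True by (auto simp: c_def ext_def)
    qed (simp add: c_def ext_def)
  qed
  have c3: "\<exists>\<alpha>. c \<alpha> \<noteq> 0"
  proof -
    obtain \<alpha> where a: "f1 \<alpha> \<noteq> f2 \<alpha>" using f(3) by blast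
    have "\<alpha> \<in> V"
    proof (rule ccontr)
      assume "\<alpha> \<notin> V"
      hence "f1 \<alpha> = undefined" "f2 \<alpha> = undefined" using f(1,2) unfolding Cs_def by auto
      thus False using a by simp
    qed
    thus ?thesis using a by (auto simp: c_def ext_def)
  qed
  have c4: "\<forall>x\<in>S. \<forall>p\<in>P. int p dvd mpoly_eval d A c x"
  proof (intro ballI)
    fix x p assume x: "x \<in> S" and p: "p \<in> P"
    define y where "y = reduce_mod p x"
    have "(p, y) \<in> Dom" unfolding Dom_def y_def using x p by auto
    hence "mpoly_eval d A (ext f1) y mod int p = mpoly_eval d A (ext f2) y mod int p"
      using fun_cong[OF f(4), of "(p,y)"] by (simp add: \<Phi>_def)
    hence e: "[mpoly_eval d A (ext f1) y = mpoly_eval d A (ext f2) y] (mod int p)"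
      by (simp add: cong_def)
    have xy: "\<And>g. [mpoly_eval d A g x = mpoly_eval d A g y] (mod int p)"
      unfolding y_def by (intro eval_cong cong_sym[OF reduce_cong])
    have "[mpoly_eval d A (ext f1) x = mpoly_eval d A (ext f2) x] (mod int p)"
      using cong_trans[OF cong_trans[OF xy e] cong_sym[OF xy]] .
    hence "int p dvd mpoly_eval d A (ext f1) x - mpoly_eval d A (ext f2) x"
      by (simp add: cong_iff_dvd_diff)
    thus "int p dvd mpoly_eval d A c x" unfolding c_def by (simp add: eval_diff)
  qed
  show ?thesis using c1 c2 c3 c4 by blast
qed




lemma vanish:
  assumes S: "S \<subseteq> grid d N" and N: "N \<ge> 1" and P: "finite P" "\<And>p. p\<in>P \<Longrightarrow> prime p"
    and big: "(\<Prod>p\<in>P. p ^ card (reduce_mod p ` S)) < (H+1) ^ card (mono_vecs d A)"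
    and small: "real (card (mono_vecs d A)) * real H * real N powr A < real (\<Prod>P)"
    and HA: "real H \<le> real N powr A"
  shows "\<exists>c. nonzero_poly_complexity d N A c \<and> (\<forall>x\<in>S. mpoly_eval d A c x = 0)"
proof -
  obtain c where c: "\<forall>\<alpha>. \<alpha> \<notin> mono_vecs d A \<longrightarrow> c \<alpha> = 0" "\<forall>\<alpha>. \<bar>c \<alpha>\<bar> \<le> int H" "\<exists>\<alpha>. c \<alpha> \<noteq> 0"
      "\<forall>x\<in>S. \<forall>p\<in>P. int p dvd mpoly_eval d A c x"
    using siegel[OF S P big] by blast
  have "nonzero_poly_complexity d N A c"
    unfolding nonzero_poly_complexity_def
  proof (intro conjI allI impI)
    fix \<alpha> show "real_of_int \<bar>c \<alpha>\<bar> \<le> real N powr A"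
      using c(2) HA by (metis of_int_le_iff of_int_of_nat_eq order_trans)
  qed (use c in auto)
  moreover have "\<forall>x\<in>S. mpoly_eval d A c x = 0"
  proof
    fix x assume x: "x \<in> S"
    have dv: "int (\<Prod>P) dvd mpoly_eval d A c x" using prod_primes_dvd[OF P(1)] P(2) c(4) x by blast
    have "real_of_int \<bar>mpoly_eval d A c x\<bar> \<le> real (card (mono_vecs d A)) * real_of_int (int H) * real N powr A"
      using S x N c(2) by (intro eval_bound) auto
    hence "real_of_int \<bar>mpoly_eval d A c x\<bar> < real (\<Prod>P)" using small by simp
    hence lt: "\<bar>mpoly_eval d A c x\<bar> < int (\<Prod>P)" by linarith
    show "mpoly_eval d A c x = 0"
    proof (rule ccontr)
      assume "mpoly_eval d A c x \<noteq> 0"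
      hence "\<bar>int (\<Prod>P)\<bar> \<le> \<bar>mpoly_eval d A c x\<bar>" using dv dvd_imp_le_int by blast
      thus False using lt by simp
    qed
  qed
  ultimately show ?thesis by blast
qed

lemma prim_0: "prim 0 = 1"
proof -
  have "{p::nat. prime p \<and> p \<le> 0} = {}" by auto
  thus ?thesis unfolding prim_def by (metis prod.empty)
qed

lemma prim_Suc: "prim (Suc m) \<le> Suc m * prim m"
proof (cases "prime (Suc m)")
  case True
  have "{p. prime p \<and> p \<le> Suc m} = insert (Suc m) {p. prime p \<and> p \<le> m}" using True by auto
  thus ?thesis using finite_primes_le[of m] by (simp add: prim_def)
next
  case False
  have "{p. prime p \<and> p \<le> Suc m} = {p. prime p \<and> p \<le> m}" using False le_Suc_eq by auto
  thus ?thesis by (simp add: prim_def)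
qed

lemma ln_prim: "ln (real (prim q)) = (\<Sum>p\<in>{p. prime p \<and> p \<le> q}. ln (real p))"
  unfolding prim_def using finite_primes_le[of q]
  by (simp, subst ln_prod) (auto simp: prime_gt_0_nat)




lemma core:
  fixes d N :: nat and \<kappa> K A c1 :: real and S :: "(nat \<Rightarrow> int) set"
  assumes d: "d \<ge> 1" and \<kappa>: "0 \<le> \<kappa>" and K: "K > 0" and c1: "c1 \<ge> 0"
    and cheb: "\<forall>q. ln (real (prim q)) \<ge> real q / 2 - c1"
    and N: "N \<ge> 2" and S: "S \<subseteq> grid d N"
    and hyp: "\<forall>p::nat. prime p \<longrightarrow> real (card (reduce_mod p ` S)) \<le> K * real p powr \<kappa>"
    and A: "A \<ge> 1"
    and key: "K * ((2*(2*real d+4) + 4*c1 + 2) * A * ln (real N)) powr \<kappa>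
                * (((2*real d+4) + (2*(2*real d+4)+4*c1+2)) * A * ln (real N))
              < (A / real d)^d * (A * ln (real N))"
  shows "\<exists>c. nonzero_poly_complexity d N A c \<and> (\<forall>x\<in>S. mpoly_eval d A c x = 0)"
proof -
  define L where "L = ln (real N)"
  define b where "b = 2*real d+4"
  define g where "g = 2*b + 4*c1 + 2"
  have key': "K * (g * A * L) powr \<kappa> * ((b + g) * A * L) < (A / real d)^d * (A * L)"
    using key by (simp add: L_def b_def g_def)
  have "ln (2::real) \<le> L" unfolding L_def using N by (intro ln_mono) auto
  hence L: "L \<ge> 1/2" using ln2_ge_two_thirds by linarith
  have "1 * (1/2) \<le> A * L" using A L by (intro mult_mono) auto
  hence AL: "A * L \<ge> 1/2" by simp
  define V where "V = mono_vecs d A"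
  define M where "M = card V"
  have Mlow: "real M \<ge> (A / real d)^d"
  proof -
    define t where "t = nat \<lfloor>A\<rfloor> div d"
    have "(t+1)^d \<le> M" unfolding M_def V_def t_def using card_mono_vecs_lower[of A d] A by simp
    hence 1: "real ((t+1)^d) \<le> real M" by (simp only: of_nat_le_iff)
    have "nat \<lfloor>A\<rfloor> < d * (t+1)"
    proof -
      have "nat \<lfloor>A\<rfloor> = d * t + nat \<lfloor>A\<rfloor> mod d" unfolding t_def by simp
      moreover have "nat \<lfloor>A\<rfloor> mod d < d" using d by simp
      ultimately show ?thesis by (simp add: algebra_simps)
    qed
    hence "real (nat \<lfloor>A\<rfloor>) + 1 \<le> real d * real (t+1)" by (simp flip: of_nat_mult of_nat_Suc)
    moreover have "A < real (nat \<lfloor>A\<rfloor>) + 1" using A by linarith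
    ultimately have "A / real d \<le> real (t+1)" using d by (simp add: divide_le_eq mult.commute)
    hence "(A / real d)^d \<le> real (t+1) ^ d" using A by (intro power_mono) auto
    thus ?thesis using 1 by simp
  qed
  have Mpos: "real M > 0"
  proof -
    have "(A / real d)^d > 0" using A d by simp
    thus ?thesis using Mlow by linarith
  qed
  have lnM: "ln (real M) \<le> real d * A"
  proof -
    have "M \<le> (nat \<lfloor>A\<rfloor> + 1)^d" unfolding M_def V_def by (rule card_mono_vecs_upper)
    hence "real M \<le> real (nat \<lfloor>A\<rfloor> + 1) ^ d" by (metis of_nat_le_iff of_nat_power)
    also have "\<dots> \<le> (A + 1) ^ d" using A by (intro power_mono) auto
    finally have "ln (real M) \<le> ln ((A+1)^d)" using Mpos by (intro ln_mono) auto
    also have "\<dots> = real d * ln (A+1)" using A by (simp add: ln_realpow)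
    also have "\<dots> \<le> real d * A" using A by (intro mult_left_mono) (auto simp: ln_le_minus_one[of "A+1", simplified])
    finally show ?thesis .
  qed
  define NA where "NA = real N powr A"
  have NA2: "NA \<ge> 2"
  proof -
    have "real N powr 1 \<le> real N powr A" using N A by (intro powr_mono) auto
    thus ?thesis using N by (simp add: NA_def)
  qed
  define H where "H = nat \<lfloor>NA\<rfloor>"
  have fl: "NA < real_of_int \<lfloor>NA\<rfloor> + 1" by (rule real_of_int_floor_add_one_gt)
  have fl2: "real_of_int \<lfloor>NA\<rfloor> \<le> NA" by (rule of_int_floor_le)
  have Heq: "real H = real_of_int \<lfloor>NA\<rfloor>" using NA2 unfolding H_def by simp
  have H1a: "real H \<le> NA" "real H \<ge> 1" using NA2 fl fl2 Heq by auto
  have "real (H+1) = real H + 1" by simp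
  hence H1b: "real (H+1) \<ge> NA" using fl Heq by linarith
  note H1 = H1a H1b
  have lnNA: "ln NA = A * L" using N by (simp add: NA_def L_def ln_powr)
  have "ln NA \<le> ln (real (H+1))" using H1 NA2 by (intro ln_mono) auto
  hence lnH1: "ln (real (H+1)) \<ge> A * L" using lnNA by simp
  have "ln (real H) \<le> ln NA" using H1 by (intro ln_mono) auto
  hence lnH: "ln (real H) \<le> A * L" using lnNA by simp
  define T where "T = 2*A*L + ln (real M) + 1"
  have "M > 0" using Mpos by simp
  hence "real M \<ge> 1" by simp
  hence "ln (real M) \<ge> 0" by simp
  hence Tpos: "T > 0" using AL unfolding T_def by linarith
  have Tle: "T \<le> b * A * L"
  proof -
    have "A \<le> 2 * (A * L)" using A L by (simp add: mult_left_mono[of "1/2" L A, simplified])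
    hence "real d * A \<le> real d * (2 * (A * L))" by (intro mult_left_mono) auto
    thus ?thesis unfolding T_def b_def using lnM AL by (simp add: algebra_simps)
  qed
  define q0 where "q0 = nat \<lceil>2*(T+c1)\<rceil>"
  have q0: "ln (real (prim q0)) \<ge> T"
  proof -
    have "real q0 \<ge> 2*(T+c1)" unfolding q0_def by linarith
    hence "T \<le> real q0 / 2 - c1" by (simp add: field_simps)
    moreover have "real q0 / 2 - c1 \<le> ln (real (prim q0))" using cheb by blast
    ultimately show ?thesis by (rule order_trans)
  qed
  define Q where "Q = (LEAST q. ln (real (prim q)) \<ge> T)"
  have QT: "ln (real (prim Q)) \<ge> T" unfolding Q_def by (rule LeastI[of _ q0]) (rule q0)
  have Qq0: "Q \<le> q0" unfolding Q_def by (rule Least_le) (rule q0)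
  have "Q \<noteq> 0"
  proof
    assume "Q = 0"
    hence "ln (real (prim Q)) = 0" by (simp add: prim_0)
    thus False using QT Tpos by simp
  qed
  then obtain m where m: "Q = Suc m" by (cases Q) auto
  have "\<not> ln (real (prim m)) \<ge> T" using not_less_Least[of m "\<lambda>q. ln (real (prim q)) \<ge> T"] m
    unfolding Q_def by simp
  hence lm: "ln (real (prim m)) < T" by simp
  have "prim Q \<le> Q * prim m" using prim_Suc[of m] m by simp
  hence "real (prim Q) \<le> real (Q * prim m)" by (simp only: of_nat_le_iff)
  hence "real (prim Q) \<le> real Q * real (prim m)" by simp
  hence "ln (real (prim Q)) \<le> ln (real Q * real (prim m))" using prim_pos[of Q] by (intro ln_mono) auto
  also have "\<dots> = ln (real Q) + ln (real (prim m))" using prim_pos[of m] m by (simp add: ln_mult)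
  finally have lnQ_upper: "ln (real (prim Q)) < T + ln (real Q)" using lm by linarith
  have Qg: "real Q \<le> g * A * L"
  proof -
    have "real q0 = real_of_int \<lceil>2*(T+c1)\<rceil>" unfolding q0_def using Tpos c1 by simp
    moreover have "real_of_int \<lceil>2*(T+c1)\<rceil> \<le> 2*(T+c1)+1" by (rule of_int_ceiling_le_add_one)
    ultimately have "real q0 \<le> 2*(T+c1) + 1" by linarith
    hence "real Q \<le> 2*(T+c1) + 1" using Qq0 by linarith
    also have "\<dots> \<le> 2*b*A*L + 2*c1 + 1" using Tle by simp
    also have "\<dots> \<le> g*A*L"
    proof -
      have "(4*c1+2) * (1/2) \<le> (4*c1+2) * (A*L)" using c1 by (intro mult_left_mono[OF AL]) simp
      hence "2*c1 + 1 \<le> (4*c1+2) * (A*L)" by simp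
      thus ?thesis unfolding g_def by (simp add: algebra_simps)
    qed
    finally show ?thesis .
  qed
  have lnQ: "ln (real Q) \<le> g * A * L"
  proof -
    have "ln (real Q) \<le> real Q - 1" using m by (intro ln_le_minus_one) auto
    thus ?thesis using Qg by linarith
  qed
  define P where "P = {p. prime p \<and> p \<le> Q}"
  have finP: "finite P" using finite_primes_le by (simp add: P_def)
  have primP: "\<And>p. p \<in> P \<Longrightarrow> prime p" by (simp add: P_def)
  have prodP: "\<Prod>P = prim Q" by (simp add: P_def prim_def)
  have small: "real M * real H * real N powr A < real (\<Prod>P)"
  proof -
    have pos: "real M * real H * NA > 0" using Mpos H1 NA2 by simp
    have "ln (real M * real H * NA) = ln (real M) + ln (real H) + ln NA"
      using Mpos H1 NA2 by (simp add: ln_mult)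
    also have "\<dots> < T" using lnH lnNA unfolding T_def by linarith
    also have "\<dots> \<le> ln (real (\<Prod>P))" using QT prodP by simp
    finally show ?thesis using pos prim_pos[of Q] prodP by (simp add: NA_def)
  qed
  have big: "(\<Prod>p\<in>P. p ^ card (reduce_mod p ` S)) < (H+1) ^ card (mono_vecs d A)"
  proof -
    let ?X = "(\<Prod>p\<in>P. p ^ card (reduce_mod p ` S))"
    have Xpos: "real ?X > 0" using finP primP by (simp add: prod_pos prime_gt_0_nat)
    have "ln (real ?X) = (\<Sum>p\<in>P. real (card (reduce_mod p ` S)) * ln (real p))"
      using finP primP by (simp, subst ln_prod) (auto simp: prime_gt_0_nat ln_realpow)
    also have "\<dots> \<le> (\<Sum>p\<in>P. (K * real Q powr \<kappa>) * ln (real p))"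
    proof (intro sum_mono mult_right_mono)
      fix p assume p: "p \<in> P"
      have "real (card (reduce_mod p ` S)) \<le> K * real p powr \<kappa>" using hyp primP[OF p] by blast
      also have "\<dots> \<le> K * real Q powr \<kappa>" using p K \<kappa> by (intro mult_left_mono powr_mono2) (auto simp: P_def)
      finally show "real (card (reduce_mod p ` S)) \<le> K * real Q powr \<kappa>" .
      show "0 \<le> ln (real p)" using primP[OF p] prime_ge_1_nat by simp
    qed
    also have "\<dots> = K * real Q powr \<kappa> * ln (real (prim Q))"
      by (simp add: sum_distrib_left[symmetric] ln_prim P_def)
    also have "\<dots> \<le> K * (g*A*L) powr \<kappa> * ((b+g)*A*L)"
    proof (rule mult_mono)
      show "K * real Q powr \<kappa> \<le> K * (g * A * L) powr \<kappa>" using Qg K \<kappa> by (intro mult_left_mono powr_mono2) auto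
      show "ln (real (prim Q)) \<le> (b + g) * A * L" using lnQ_upper Tle lnQ by (simp add: algebra_simps)
      show "0 \<le> K * (g * A * L) powr \<kappa>" using K by simp
      show "0 \<le> ln (real (prim Q))" using prim_pos[of Q] by simp
    qed
    also have "\<dots> < (A / real d)^d * (A * L)" by (rule key')
    also have "\<dots> \<le> real M * ln (real (H+1))" using Mlow lnH1 AL by (intro mult_mono) auto
    also have "\<dots> = ln (real ((H+1) ^ M))" by (simp add: ln_realpow)
    finally have "ln (real ?X) < ln (real ((H+1) ^ M))" .
    hence "real ?X < real ((H+1) ^ M)" using Xpos by simp
    thus ?thesis unfolding M_def V_def by (simp only: of_nat_less_iff)
  qed
  have HA: "real H \<le> real N powr A" using H1(1) unfolding NA_def .
  have N1: "N \<ge> 1" using N by simp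
  show ?thesis by (rule vanish[OF S N1 finP primP big small[unfolded M_def V_def] HA])
qed




lemma key_ineq:
  fixes d :: nat and \<kappa> K g B L C A :: real
  assumes K: "K > 0" and d: "d \<ge> 1" and \<kappa>: "0 \<le> \<kappa>" "\<kappa> < real d" and g: "g > 0" and B: "B > 0"
    and L: "L \<ge> 1/2" and C: "C \<ge> (K * g powr \<kappa> * B * real d ^ d + 1) powr (1 / (real d - \<kappa>))"
    and A: "A = C * L powr (\<kappa> / (real d - \<kappa>))"
  shows "K * (g * A * L) powr \<kappa> * (B * A * L) < (A / real d)^d * (A * L)"
proof -
  define K' where "K' = K * g powr \<kappa> * B * real d ^ d"
  have K'pos: "K' > 0" using K g B d by (simp add: K'_def)
  have dk: "real d - \<kappa> > 0" using \<kappa> by simp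
  have "(K * g powr \<kappa> * B * real d ^ d + 1) powr (1 / (real d - \<kappa>)) > 0" using K'pos by (simp add: K'_def)
  hence Cpos: "C > 0" using C by linarith
  have Lpos: "L > 0" using L by simp
  have Apos: "A > 0" using Cpos Lpos by (simp add: A)
  have "C powr (real d - \<kappa>) \<ge> ((K' + 1) powr (1 / (real d - \<kappa>))) powr (real d - \<kappa>)"
    using C K'pos dk by (intro powr_mono2) (auto simp: K'_def)
  also have "((K' + 1) powr (1 / (real d - \<kappa>))) powr (real d - \<kappa>) = K' + 1"
    using K'pos dk by (simp add: powr_powr)
  finally have Cb: "C powr (real d - \<kappa>) \<ge> K' + 1" .
  have "A powr (real d - \<kappa>) = C powr (real d - \<kappa>) * (L powr (\<kappa> / (real d - \<kappa>))) powr (real d - \<kappa>)"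
    using Cpos Lpos by (simp add: A powr_mult)
  also have "(L powr (\<kappa> / (real d - \<kappa>))) powr (real d - \<kappa>) = L powr \<kappa>"
    using dk by (simp add: powr_powr)
  finally have Ad: "A powr (real d - \<kappa>) \<ge> (K' + 1) * L powr \<kappa>"
    using Cb Lpos by (simp add: mult_right_mono)
  have "A powr real d = A powr (real d - \<kappa>) * A powr \<kappa>" by (simp add: powr_add[symmetric])
  also have "\<dots> \<ge> (K' + 1) * L powr \<kappa> * A powr \<kappa>" using Ad Apos by (intro mult_right_mono) auto
  finally have Ad2: "A powr real d \<ge> (K' + 1) * L powr \<kappa> * A powr \<kappa>" .
  have pos: "L powr \<kappa> * A powr \<kappa> > 0" using Lpos Apos by simp
  have "K * (g * A * L) powr \<kappa> * B = K' * (L powr \<kappa> * A powr \<kappa>) / real d ^ d"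
    using g Apos Lpos d by (simp add: K'_def powr_mult)
  also have "\<dots> < (K' + 1) * (L powr \<kappa> * A powr \<kappa>) / real d ^ d"
    using pos d by (intro divide_strict_right_mono mult_strict_right_mono) auto
  also have "\<dots> \<le> A powr real d / real d ^ d"
    using Ad2 d by (intro divide_right_mono) (auto simp: mult.assoc)
  also have "\<dots> = (A / real d) ^ d" using Apos by (simp add: powr_realpow power_divide)
  finally have "K * (g * A * L) powr \<kappa> * B < (A / real d) ^ d" .
  hence "K * (g * A * L) powr \<kappa> * B * (A * L) < (A / real d) ^ d * (A * L)"
    using Apos Lpos by (intro mult_strict_right_mono) auto
  thus ?thesis by (simp add: mult.assoc)
qed

theorem theorem1p2:
  fixes d :: nat and \<kappa> K \<epsilon> :: real
  assumes "d \<ge> 1" and "0 \<le> \<kappa>" and "\<kappa> < real d" and "K > 0" and "\<epsilon> > 0"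
  shows "\<exists>C > 0. \<forall>(N::nat) (S :: (nat \<Rightarrow> int) set).
           N \<ge> 2 \<and> S \<subseteq> grid d N \<and>
           (\<forall>p::nat. prime p \<longrightarrow> real (card (reduce_mod p ` S)) \<le> K * real p powr \<kappa>)
           \<longrightarrow> (\<exists>c. nonzero_poly_complexity d N (C * ln (real N) powr (\<kappa> / (real d - \<kappa>))) c \<and>
                   real (card {x\<in>S. mpoly_eval d (C * ln (real N) powr (\<kappa> / (real d - \<kappa>))) c x = 0})
                     \<ge> (1 - \<epsilon>) * real (card S))"
proof -
  note d = assms(1) and \<kappa> = assms(2,3) and K = assms(4) and \<epsilon> = assms(5)
  obtain c0 where c0: "\<forall>q. ln (real (prim q)) \<ge> real q / 2 - c0" using cheb by blast
  define c1 where "c1 = max c0 0"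
  have c1: "c1 \<ge> 0" by (simp add: c1_def)
  have cheb1: "\<forall>q. ln (real (prim q)) \<ge> real q / 2 - c1"
  proof
    fix q :: nat
    have "c0 \<le> c1" unfolding c1_def by simp
    thus "ln (real (prim q)) \<ge> real q / 2 - c1" using c0 by (metis diff_left_mono order_trans)
  qed
  define e where "e = \<kappa> / (real d - \<kappa>)"
  have e: "e \<ge> 0" using \<kappa> by (simp add: e_def)
  define b where "b = 2*real d+4"
  define g where "g = 2*b + 4*c1 + 2"
  define K' where "K' = K * g powr \<kappa> * (b + g) * real d ^ d"
  have gpos: "g > 0" using c1 by (simp add: g_def b_def)
  have bgpos: "b + g > 0" using gpos by (simp add: b_def)
  have K'pos: "K' > 0" using K gpos bgpos d by (simp add: K'_def)
  define C where "C = max (2 powr e) ((K' + 1) powr (1 / (real d - \<kappa>)))"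
  have Cpos: "C > 0" unfolding C_def using K'pos by (simp add: less_max_iff_disj)
  show ?thesis
  proof (intro exI[of _ C] conjI allI impI Cpos)
    fix N :: nat and S :: "(nat \<Rightarrow> int) set"
    assume h: "N \<ge> 2 \<and> S \<subseteq> grid d N \<and>
           (\<forall>p::nat. prime p \<longrightarrow> real (card (reduce_mod p ` S)) \<le> K * real p powr \<kappa>)"
    define L where "L = ln (real N)"
    define A where "A = C * ln (real N) powr (\<kappa> / (real d - \<kappa>))"
    have "ln (2::real) \<le> L" unfolding L_def using h by (intro ln_mono) auto
    hence L: "L \<ge> 1/2" using ln2_ge_two_thirds by linarith
    have A1: "A \<ge> 1"
    proof -
      have "(1/2) powr e \<le> L powr e" using L e by (intro powr_mono2) auto
      moreover have "2 powr e \<le> C" unfolding C_def by (rule max.cobounded1)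
      ultimately have "2 powr e * (1/2) powr e \<le> C * L powr e"
        using Cpos by (intro mult_mono) auto
      moreover have "2 powr e * (1/2) powr e = 1" by (simp add: powr_mult[symmetric])
      ultimately show ?thesis by (simp add: A_def L_def e_def)
    qed
    have key: "K * (g * A * L) powr \<kappa> * ((b + g) * A * L) < (A / real d)^d * (A * L)"
    proof (rule key_ineq[OF K d \<kappa> gpos bgpos L])
      show "(K * g powr \<kappa> * (b + g) * real d ^ d + 1) powr (1 / (real d - \<kappa>)) \<le> C"
        unfolding C_def K'_def by (rule max.cobounded2)
      show "A = C * L powr (\<kappa> / (real d - \<kappa>))" by (simp add: A_def L_def)
    qed
    have key2: "K * ((2*(2*real d+4) + 4*c1 + 2) * A * ln (real N)) powr \<kappa>
                * (((2*real d+4) + (2*(2*real d+4)+4*c1+2)) * A * ln (real N))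
              < (A / real d)^d * (A * ln (real N))"
      using key by (simp add: b_def g_def L_def)
    obtain c where c: "nonzero_poly_complexity d N A c" "\<forall>x\<in>S. mpoly_eval d A c x = 0"
      using core[OF d \<kappa>(1) K c1 cheb1 _ _ _ A1 key2] h by blast
    have "{x\<in>S. mpoly_eval d A c x = 0} = S" using c(2) by auto
    moreover have "(1 - \<epsilon>) * real (card S) \<le> 1 * real (card S)"
      using \<epsilon> by (intro mult_right_mono) auto
    ultimately have "real (card {x\<in>S. mpoly_eval d A c x = 0}) \<ge> (1 - \<epsilon>) * real (card S)"
      by simp
    thus "\<exists>c. nonzero_poly_complexity d N (C * ln (real N) powr (\<kappa> / (real d - \<kappa>))) c \<and>
                   real (card {x\<in>S. mpoly_eval d (C * ln (real N) powr (\<kappa> / (real d - \<kappa>))) c x = 0})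
                     \<ge> (1 - \<epsilon>) * real (card S)"
      using c(1) unfolding A_def by blast
  qed
qed


end
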